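(* For all $\alpha\in(0,\pi/2)$ and $\beta\in[0,\alpha]$, we have $r_0(\alpha,\beta)\le 1$. Moreover, $r_0(\alpha,\beta)\le 0$ if and only if $\alpha\le\pi/4$ and $\beta\le t(\alpha)$.
   Context: For $\alpha\in(0,\pi/2)$ and $\beta\in[0,\alpha]$, let $A=\frac{2\tan\beta}{\tan\alpha+\tan\beta}$, $B=2\cos(2\alpha)$, and $r_0(\alpha,\beta)=\frac{2A-B}{2-AB}$. Let $t(\alpha)=\arctan\!\left(\frac{\sin(3\alpha)-\sin\alpha}{3\cos\alpha-\cos(3\alpha)}\right)$. *)

theory Defs
  imports Complex_Main
begin

definition A_fn :: "real \<Rightarrow> real \<Rightarrow> real" where
  "A_fn \<alpha> \<beta> = 2 * tan \<beta> / (tan \<alpha> + tan \<beta>)"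

definition B_fn :: "real \<Rightarrow> real" where
  "B_fn \<alpha> = 2 * cos (2 * \<alpha>)"

definition r0 :: "real \<Rightarrow> real \<Rightarrow> real" where
  "r0 \<alpha> \<beta> = (2 * A_fn \<alpha> \<beta> - B_fn \<alpha>) / (2 - A_fn \<alpha> \<beta> * B_fn \<alpha>)"

definition t_fn :: "real \<Rightarrow> real" where
  "t_fn \<alpha> = arctan ((sin (3 * \<alpha>) - sin \<alpha>) / (3 * cos \<alpha> - cos (3 * \<alpha>)))"

end

theory Submission
  imports Defs
begin

theorem lemma6:
  fixes \<alpha> \<beta> :: real
  assumes "0 < \<alpha>" and "\<alpha> < pi / 2" and "0 \<le> \<beta>" and "\<beta> \<le> \<alpha>"
  shows "r0 \<alpha> \<beta> \<le> 1 \<and> (r0 \<alpha> \<beta> \<le> 0 \<longleftrightarrow> \<alpha> \<le> pi / 4 \<and> \<beta> \<le> t_fn \<alpha>)"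
proof -
  define s where "s = sin \<alpha>"
  define c where "c = cos \<alpha>"
  define b where "b = tan \<beta>"
  have s0: "s > 0" unfolding s_def using assms by (intro sin_gt_zero) auto
  have c0: "c > 0" unfolding c_def using assms by (intro cos_gt_zero) auto
  have sc: "s^2 + c^2 = 1" unfolding s_def c_def by simp
  have b0: "b \<ge> 0" unfolding b_def using assms by (intro tan_pos_pi2_le) auto
  have ta: "tan \<alpha> = s / c" unfolding s_def c_def tan_def by simp
  have bl: "b \<le> s / c" unfolding b_def ta[symmetric] using assms
    by (intro tan_mono_le) auto
  hence bl': "b * c \<le> s" using c0 by (simp add: field_simps)
  have c1: "c^2 \<le> 1" using sc s0 by (smt (verit) zero_le_power2)
  have sp: "s + b * c > 0" using s0 b0 c0 by (simp add: add_pos_nonneg)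
  define A where "A = 2 * b * c / (s + b * c)"
  define B where "B = 2 * (c^2 - s^2)"
  have Aeq: "A_fn \<alpha> \<beta> = A" unfolding A_fn_def A_def ta b_def[symmetric]
    using c0 by (simp add: field_simps)
  have Beq: "B_fn \<alpha> = B" unfolding B_fn_def B_def c_def s_def by (simp add: cos_double)
  have A0: "A \<ge> 0" unfolding A_def using sp b0 c0 by simp
  have A1: "A \<le> 1" unfolding A_def using sp bl' by (simp add: field_simps)
  have Bl: "B < 2" "B > -2" unfolding B_def using s0 c0 sc by (smt (verit) power2_less_0 zero_less_power)+
  have AB: "A * B < 2"
  proof (cases "B \<ge> 0")
    case True then have "A * B \<le> 1 * B" using A1 by (intro mult_right_mono) auto
    then show ?thesis using Bl by linarith
  next
    case False then have "A * B \<le> 0" using A0 by (simp add: mult_nonneg_nonpos)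
    then show ?thesis by linarith
  qed
  have D: "2 - A * B > 0" using AB by linarith
  have r: "r0 \<alpha> \<beta> = (2 * A - B) / (2 - A * B)" unfolding r0_def Aeq Beq ..
  have part1: "r0 \<alpha> \<beta> \<le> 1"
  proof -
    have "(A - 1) * (2 + B) \<le> 0" using A1 Bl by (intro mult_nonpos_nonneg) auto
    hence "2 * A - B \<le> 2 - A * B" by (simp add: algebra_simps)
    thus ?thesis unfolding r using D by simp
  qed
  have r0iff: "r0 \<alpha> \<beta> \<le> 0 \<longleftrightarrow> 2 * A \<le> B" unfolding r using D
    by (simp add: divide_le_0_iff)
  also have "\<dots> \<longleftrightarrow> 2 * b * c \<le> (c^2 - s^2) * (s + b * c)"
    unfolding A_def B_def using sp by (simp add: field_simps) linarith
  also have "\<dots> \<longleftrightarrow> b * (c * (3 - 2 * c^2)) \<le> s * (c^2 - s^2)"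
  proof -
    have "(c^2 - s^2) * (s + b * c) - 2 * b * c = s * (c^2 - s^2) - b * (c * (3 - 2 * c^2))"
      using sc by algebra
    thus ?thesis by linarith
  qed
  finally have e1: "r0 \<alpha> \<beta> \<le> 0 \<longleftrightarrow> b * (c * (3 - 2 * c^2)) \<le> s * (c^2 - s^2)" .
  define R where "R = s * (c^2 - s^2) / (c * (3 - 2 * c^2))"
  have dpos: "c * (3 - 2 * c^2) > 0" using c0 c1 by simp
  have e2: "r0 \<alpha> \<beta> \<le> 0 \<longleftrightarrow> b \<le> R" unfolding e1 R_def using dpos
    by (simp add: pos_le_divide_eq)
  have s3: "sin (3 * \<alpha>) - sin \<alpha> = 2 * s * (c^2 - s^2)"
  proof -
    have "sin (3 * \<alpha>) = sin (2 * \<alpha> + \<alpha>)" by (simp add: algebra_simps)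
    also have "\<dots> = 2 * s * c * c + (c^2 - s^2) * s"
      unfolding sin_add sin_double cos_double s_def c_def by simp
    finally have "sin (3 * \<alpha>) = 2 * s * c * c + (c^2 - s^2) * s" .
    thus ?thesis using sc unfolding s_def by algebra
  qed
  have c3: "3 * cos \<alpha> - cos (3 * \<alpha>) = 2 * c * (3 - 2 * c^2)"
    unfolding cos_treble_cos c_def by (simp add: algebra_simps power2_eq_square power3_eq_cube)
  have tR: "t_fn \<alpha> = arctan R" unfolding t_fn_def s3 c3 R_def
  proof -
    have "2 * s * (c\<^sup>2 - s\<^sup>2) / (2 * c * (3 - 2 * c\<^sup>2)) = s * (c\<^sup>2 - s\<^sup>2) / (c * (3 - 2 * c\<^sup>2))"
      by (metis (no_types) mult.assoc mult_divide_mult_cancel_left_if zero_neq_numeral)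
    thus "arctan (2 * s * (c\<^sup>2 - s\<^sup>2) / (2 * c * (3 - 2 * c\<^sup>2))) = arctan (s * (c\<^sup>2 - s\<^sup>2) / (c * (3 - 2 * c\<^sup>2)))" by simp
  qed
  have e3: "\<beta> \<le> t_fn \<alpha> \<longleftrightarrow> b \<le> R"
  proof -
    have "\<beta> = arctan b" unfolding b_def using assms by (intro arctan_tan[symmetric]) auto
    thus ?thesis unfolding tR using arctan_le_iff by simp
  qed
  have e4: "b \<le> R \<Longrightarrow> \<alpha> \<le> pi / 4"
  proof -
    assume "b \<le> R"
    hence "R \<ge> 0" using b0 by simp
    hence "c^2 - s^2 \<ge> 0" unfolding R_def using dpos s0
      by (simp add: zero_le_divide_iff zero_le_mult_iff)
    hence "s \<le> c" using s0 c0 by (metis diff_ge_0_iff_ge less_imp_le power2_le_imp_le)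
    hence "tan \<alpha> \<le> tan (pi/4)" unfolding ta tan_45 using c0 by simp
    thus "\<alpha> \<le> pi / 4" using assms by (subst (asm) tan_mono_le_eq) auto
  qed
  show ?thesis using part1 e2 e3 e4 by blast
qed

end
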